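(* Let $K$ be a field of characteristic $\neq 2$, $n\ge1$, and let $\mathcal C$ be an EACP over $K$ with natural basis $\{h_1,\dots,h_n,r\}$ and structural constants $a_{ij},b_i$. Suppose $\sum_{j=1}^n a_{ij}a_{jk}=0$ and $b_i=0$ for all $i,k=1,\dots,n$. Then $(xy)z=0$ and $x(yz)=0$ for all $x,y,z\in\mathcal C$.
   Context: An EACP over a field $K$ (characteristic $\neq 2$) is a $K$-algebra $\mathcal C$ with a basis $\{h_1,\dots,h_n,r\}$ (called a natural basis) whose multiplication is determined by bilinearity from $$h_ir=rh_i=\tfrac12\Big(\sum_{j=1}^n a_{ij}h_j+b_ir\Big),\qquad h_ih_j=0\ (i,j=1,\dots,n),\qquad rr=0,$$ for some constants $a_{ij},b_i\in K$. *)

theory Defs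
  imports Main "HOL.Vector_Spaces"
begin

definition is_algebra :: "('k::field \<Rightarrow> 'v::ab_group_add \<Rightarrow> 'v) \<Rightarrow> ('v \<Rightarrow> 'v \<Rightarrow> 'v) \<Rightarrow> bool" where
  "is_algebra scale mult \<longleftrightarrow>
     vector_space scale \<and>
     (\<forall>x y z. mult (x + y) z = mult x z + mult y z) \<and>
     (\<forall>x y z. mult x (y + z) = mult x y + mult x z) \<and>
     (\<forall>c x y. mult (scale c x) y = scale c (mult x y)) \<and>
     (\<forall>c x y. mult x (scale c y) = scale c (mult x y))"

definition is_EACP ::
  "('k::field \<Rightarrow> 'v::ab_group_add \<Rightarrow> 'v) \<Rightarrow> ('v \<Rightarrow> 'v \<Rightarrow> 'v) \<Rightarrow> nat \<Rightarrow> (nat \<Rightarrow> 'v) \<Rightarrow> 'v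
    \<Rightarrow> (nat \<Rightarrow> nat \<Rightarrow> 'k) \<Rightarrow> (nat \<Rightarrow> 'k) \<Rightarrow> bool" where
  "is_EACP scale mult n h r a b \<longleftrightarrow>
     is_algebra scale mult \<and>
     inj_on h {1..n} \<and> r \<notin> h ` {1..n} \<and>
     module.independent scale (insert r (h ` {1..n})) \<and>
     module.span scale (insert r (h ` {1..n})) = UNIV \<and>
     (\<forall>i\<in>{1..n}. mult (h i) r =
         scale (1/2) ((\<Sum>j=1..n. scale (a i j) (h j)) + scale (b i) r) \<and>
       mult r (h i) =
         scale (1/2) ((\<Sum>j=1..n. scale (a i j) (h j)) + scale (b i) r)) \<and>
     (\<forall>i\<in>{1..n}. \<forall>j\<in>{1..n}. mult (h i) (h j) = 0) \<and>
     mult r r = 0"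

end

theory Submission
  imports Defs
begin

theorem mainTheorem2:
  fixes scale :: "'k::field \<Rightarrow> 'v::ab_group_add \<Rightarrow> 'v"
    and mult :: "'v \<Rightarrow> 'v \<Rightarrow> 'v"
    and n :: nat and h :: "nat \<Rightarrow> 'v" and r :: 'v
    and a :: "nat \<Rightarrow> nat \<Rightarrow> 'k" and b :: "nat \<Rightarrow> 'k"
  assumes char: "(2::'k) \<noteq> 0"
    and n: "n \<ge> 1"
    and C: "is_EACP scale mult n h r a b"
    and aa: "\<forall>i\<in>{1..n}. \<forall>k\<in>{1..n}. (\<Sum>j=1..n. a i j * a j k) = 0"
    and b0: "\<forall>i\<in>{1..n}. b i = 0"
  shows "\<forall>x y z. mult (mult x y) z = 0 \<and> mult x (mult y z) = 0"
proof -
  have alg: "is_algebra scale mult" using C unfolding is_EACP_def by blast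
  then interpret vector_space scale unfolding is_algebra_def by blast
  have addL: "\<And>x y z. mult (x + y) z = mult x z + mult y z"
   and addR: "\<And>x y z. mult x (y + z) = mult x y + mult x z"
   and scL: "\<And>c x y. mult (scale c x) y = scale c (mult x y)"
   and scR: "\<And>c x y. mult x (scale c y) = scale c (mult x y)"
    using alg unfolding is_algebra_def by blast+
  have zL: "\<And>y. mult 0 y = 0" by (metis addL add_cancel_right_right add_0)
  have zR: "\<And>y. mult y 0 = 0" by (metis addR add_cancel_right_right add_0)
  have sumR: "mult u (sum f A) = (\<Sum>j\<in>A. mult u (f j))" for u and f :: "nat \<Rightarrow> 'v" and A
    by (induct A rule: infinite_finite_induct) (simp_all add: zR addR)
  have sumL: "mult (sum f A) u = (\<Sum>j\<in>A. mult (f j) u)" for u and f :: "nat \<Rightarrow> 'v" and A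
    by (induct A rule: infinite_finite_induct) (simp_all add: zL addL)
  let ?H = "h ` {1..n}"
  have sp: "span (insert r ?H) = UNIV" using C unfolding is_EACP_def by blast
  define c where "c i = scale (1/2) (\<Sum>j=1..n. scale (a i j) (h j))" for i
  have hr: "\<And>i. i \<in> {1..n} \<Longrightarrow> mult (h i) r = c i \<and> mult r (h i) = c i"
    using C b0 unfolding is_EACP_def c_def by simp
  have hh: "\<And>i j. i \<in> {1..n} \<Longrightarrow> j \<in> {1..n} \<Longrightarrow> mult (h i) (h j) = 0"
    using C unfolding is_EACP_def by blast
  have rr: "mult r r = 0" using C unfolding is_EACP_def by blast
  have allind: "\<And>P x. subspace (Collect P) \<Longrightarrow> P r \<Longrightarrow> (\<And>i. i \<in> {1..n} \<Longrightarrow> P (h i)) \<Longrightarrow> P x"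
  proof -
    fix P x
    assume s: "subspace (Collect P)" and pr: "P r" and ph: "\<And>i. i \<in> {1..n} \<Longrightarrow> P (h i)"
    have "x \<in> span (insert r ?H)" using sp by simp
    then show "P x" by (rule span_induct[OF _ s]) (use pr ph in auto)
  qed
  have subZ: "subspace {v. \<forall>u. mult u v = 0 \<and> mult v u = 0}"
    by (rule subspaceI) (auto simp: zL zR addL addR scL scR)
  have hc: "\<And>i k. i \<in> {1..n} \<Longrightarrow> k \<in> {1..n} \<Longrightarrow> mult (h k) (c i) = 0 \<and> mult (c i) (h k) = 0"
    unfolding c_def by (simp add: scL scR sumL sumR hh)
  have rc: "\<And>i. i \<in> {1..n} \<Longrightarrow> mult r (c i) = 0 \<and> mult (c i) r = 0"
  proof -
    fix i assume i: "i \<in> {1..n}"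
    have e: "(\<Sum>j=1..n. scale (a i j) (c j)) = 0"
    proof -
      have "(\<Sum>j=1..n. scale (a i j) (c j))
          = (\<Sum>j=1..n. \<Sum>k=1..n. scale (a i j * (1/2) * a j k) (h k))"
        unfolding c_def by (simp add: scale_sum_right mult.assoc)
      also have "\<dots> = (\<Sum>k=1..n. \<Sum>j=1..n. scale (a i j * (1/2) * a j k) (h k))"
        by (rule sum.swap)
      also have "\<dots> = (\<Sum>k=1..n. scale ((1/2) * (\<Sum>j=1..n. a i j * a j k)) (h k))"
        by (simp add: scale_sum_left sum_distrib_left mult.commute mult.left_commute)
      also have "\<dots> = 0" using aa i by simp
      finally show ?thesis .
    qed
    have "mult r (c i) = scale (1/2) (\<Sum>j=1..n. scale (a i j) (mult r (h j)))"
      unfolding c_def by (simp only: scR sumR)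
    also have "\<dots> = scale (1/2) (\<Sum>j=1..n. scale (a i j) (c j))"
      using hr by (intro arg_cong[where f="scale (1/2)"] sum.cong) auto
    finally have m1: "mult r (c i) = scale (1/2) (\<Sum>j=1..n. scale (a i j) (c j))" .
    have "mult (c i) r = scale (1/2) (\<Sum>j=1..n. scale (a i j) (mult (h j) r))"
      unfolding c_def by (simp only: scL sumL)
    also have "\<dots> = scale (1/2) (\<Sum>j=1..n. scale (a i j) (c j))"
      using hr by (intro arg_cong[where f="scale (1/2)"] sum.cong) auto
    finally have m2: "mult (c i) r = scale (1/2) (\<Sum>j=1..n. scale (a i j) (c j))" .
    note m1 m2
    moreover
    ultimately show "mult r (c i) = 0 \<and> mult (c i) r = 0" using e by simp
  qed
  have cZ: "\<And>i u. i \<in> {1..n} \<Longrightarrow> mult u (c i) = 0 \<and> mult (c i) u = 0"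
  proof -
    fix i u assume i: "i \<in> {1..n}"
    have "subspace (Collect (\<lambda>u. mult u (c i) = 0 \<and> mult (c i) u = 0))"
      by (rule subspaceI) (auto simp: zL zR addL addR scL scR)
    then show "mult u (c i) = 0 \<and> mult (c i) u = 0"
      by (rule allind) (use rc hc i in auto)
  qed
  have main: "\<And>x y. mult x y \<in> {v. \<forall>u. mult u v = 0 \<and> mult v u = 0}"
  proof -
    fix x y
    have Sx: "subspace (Collect (\<lambda>x. \<forall>y. mult x y \<in> {v. \<forall>u. mult u v = 0 \<and> mult v u = 0}))"
      by (rule subspaceI) (auto simp: zL zR addL addR scL scR)
    have Sy: "\<And>x. subspace (Collect (\<lambda>y. mult x y \<in> {v. \<forall>u. mult u v = 0 \<and> mult v u = 0}))"
      by (rule subspaceI) (auto simp: zL zR addL addR scL scR)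
    have "\<forall>y. mult x y \<in> {v. \<forall>u. mult u v = 0 \<and> mult v u = 0}"
    proof (rule allind[OF Sx])
      show "\<forall>y. mult r y \<in> {v. \<forall>u. mult u v = 0 \<and> mult v u = 0}"
      proof
        fix y show "mult r y \<in> {v. \<forall>u. mult u v = 0 \<and> mult v u = 0}"
          by (rule allind[OF Sy]) (use rr hr cZ zL zR in auto)
      qed
      fix i assume i: "i \<in> {1..n}"
      show "\<forall>y. mult (h i) y \<in> {v. \<forall>u. mult u v = 0 \<and> mult v u = 0}"
      proof
        fix y show "mult (h i) y \<in> {v. \<forall>u. mult u v = 0 \<and> mult v u = 0}"
          by (rule allind[OF Sy]) (use i hh hr cZ zL zR in auto)
      qed
    qed
    then show "mult x y \<in> {v. \<forall>u. mult u v = 0 \<and> mult v u = 0}" by blast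
  qed
  show ?thesis using main by blast
qed

end
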